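(* Let $n\ge 1$ and $k\ge 2$ be integers and let $f:\{0,1,\ldots,k-1\}^n\to\mathbb{R}$ be integer submodular, i.e. $f(\mathbf{x})+f(\mathbf{y})\ge f(\mathbf{x}\vee\mathbf{y})+f(\mathbf{x}\wedge\mathbf{y})$ for all $\mathbf{x},\mathbf{y}\in\{0,\ldots,k-1\}^n$, where $\vee,\wedge$ are the componentwise maximum and minimum. Let $F$ be the generalized multilinear extension of $f$ (defined in the context). Then: (1) If $f$ is monotone (i.e. $\mathbf{x}\le\mathbf{y}$ componentwise implies $f(\mathbf{x})\le f(\mathbf{y})$), then $\frac{\partial F}{\partial \rho_{ij}}\ge 0$ for all $i\in\{1,\ldots,n\}$ and $j\in\{1,\ldots,k-1\}$. (2) $F$ is DR-submodular, i.e. $\frac{\partial^2 F}{\partial \rho_{ij}\,\partial \rho_{i'l}}\le 0$ for all $i,i'\in\{1,\ldots,n\}$ and $j,l\in\{1,\ldots,k-1\}$ (this holds even if $f$ itself is not DR-submodular).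
   Context: For $\bm{\rho}_i=(\rho_{i1},\ldots,\rho_{i,k-1})$ define the simplex $\Delta^{k-1}=\{\bm{\rho}_i\in\mathbb{R}^{k-1}:\rho_{i1}+\cdots+\rho_{i,k-1}\le 1,\ \rho_{ij}\ge 0\}$, and let $\bm{\rho}=[\bm{\rho}_1;\ldots;\bm{\rho}_n]\in\Delta^{k-1}_n:=(\Delta^{k-1})^n$. Each $\bm{\rho}_i$ parametrizes a categorical distribution on $\{0,1,\ldots,k-1\}$ giving value $j\ge1$ probability $\rho_{ij}$ and value $0$ probability $1-\sum_{j=1}^{k-1}\rho_{ij}$. The generalized multilinear extension is $F(\bm{\rho})=\mathbb{E}[f(R(\bm{\rho}))]$, where $R(\bm{\rho})\in\{0,\ldots,k-1\}^n$ has independent coordinates, the $i$-th distributed according to $\bm{\rho}_i$. Explicitly $F(\bm{\rho})=\sum_{\mathbf{x}\in\{0,\ldots,k-1\}^n} f(\mathbf{x})\prod_{i=1}^n p_i(x_i)$ with $p_i(j)=\rho_{ij}$ for $j\ge1$ and $p_i(0)=1-\sum_{j}\rho_{ij}$; this is a polynomial in the variables $\rho_{ij}$, and its partial derivatives are those of this polynomial. *)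

theory Defs
  imports "HOL-Analysis.Analysis"
begin

definition grid :: "nat \<Rightarrow> nat \<Rightarrow> (nat \<Rightarrow> nat) set" where
  "grid n k = PiE {1..n} (\<lambda>_. {..<k})"

definition vjoin :: "(nat \<Rightarrow> nat) \<Rightarrow> (nat \<Rightarrow> nat) \<Rightarrow> (nat \<Rightarrow> nat)" where
  "vjoin x y = (\<lambda>i. max (x i) (y i))"

definition vmeet :: "(nat \<Rightarrow> nat) \<Rightarrow> (nat \<Rightarrow> nat) \<Rightarrow> (nat \<Rightarrow> nat)" where
  "vmeet x y = (\<lambda>i. min (x i) (y i))"

definition integer_submodular :: "nat \<Rightarrow> nat \<Rightarrow> ((nat \<Rightarrow> nat) \<Rightarrow> real) \<Rightarrow> bool" where
  "integer_submodular n k f \<longleftrightarrow>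
     (\<forall>x\<in>grid n k. \<forall>y\<in>grid n k. f x + f y \<ge> f (vjoin x y) + f (vmeet x y))"

definition monotone_grid :: "nat \<Rightarrow> nat \<Rightarrow> ((nat \<Rightarrow> nat) \<Rightarrow> real) \<Rightarrow> bool" where
  "monotone_grid n k f \<longleftrightarrow>
     (\<forall>x\<in>grid n k. \<forall>y\<in>grid n k. (\<forall>i\<in>{1..n}. x i \<le> y i) \<longrightarrow> f x \<le> f y)"

definition simplex_prod :: "nat \<Rightarrow> nat \<Rightarrow> (nat \<Rightarrow> nat \<Rightarrow> real) set" where
  "simplex_prod n k = {\<rho>. \<forall>i\<in>{1..n}. (\<forall>j\<in>{1..k-1}. \<rho> i j \<ge> 0) \<and> (\<Sum>j\<in>{1..k-1}. \<rho> i j) \<le> 1}"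

definition catprob :: "nat \<Rightarrow> (nat \<Rightarrow> real) \<Rightarrow> nat \<Rightarrow> real" where
  "catprob k r j = (if j = 0 then 1 - (\<Sum>j'\<in>{1..k-1}. r j') else r j)"

definition gen_mle :: "nat \<Rightarrow> nat \<Rightarrow> ((nat \<Rightarrow> nat) \<Rightarrow> real) \<Rightarrow> (nat \<Rightarrow> nat \<Rightarrow> real) \<Rightarrow> real" where
  "gen_mle n k f \<rho> = (\<Sum>x\<in>grid n k. f x * (\<Prod>i\<in>{1..n}. catprob k (\<rho> i) (x i)))"

definition pderiv_ij :: "((nat \<Rightarrow> nat \<Rightarrow> real) \<Rightarrow> real) \<Rightarrow> nat \<Rightarrow> nat \<Rightarrow> (nat \<Rightarrow> nat \<Rightarrow> real) \<Rightarrow> real" where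
  "pderiv_ij G i j \<rho> = deriv (\<lambda>t. G (\<rho>(i := (\<rho> i)(j := t)))) (\<rho> i j)"

end

theory Submission
  imports Defs
begin

lemma grid_iff: "x \<in> grid n k \<longleftrightarrow> (\<forall>m\<in>{1..n}. x m < k) \<and> (\<forall>m. m \<notin> {1..n} \<longrightarrow> x m = undefined)"
  unfolding grid_def PiE_iff extensional_def by auto

lemma grid_upd: "x \<in> grid n k \<Longrightarrow> i \<in> {1..n} \<Longrightarrow> v < k \<Longrightarrow> x(i := v) \<in> grid n k"
  unfolding grid_iff by auto

lemma finite_grid: "finite (grid n k)"
  unfolding grid_def by (auto intro: finite_PiE)

lemma split_coord:
  assumes i: "i \<in> {1..n}" and P: "\<And>x v. P (x(i := v)) = P x" and k: "0 < k"
  shows "(\<Sum>x\<in>grid n k \<inter> {x. P x}. g x) =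
         (\<Sum>x\<in>grid n k \<inter> {x. P x \<and> x i = 0}. \<Sum>v<k. g (x(i := v)))"
proof -
  have "(\<Sum>x\<in>grid n k \<inter> {x. P x}. g x) =
        (\<Sum>p\<in>(grid n k \<inter> {x. P x \<and> x i = 0}) \<times> {..<k}. g ((fst p)(i := snd p)))"
  proof (rule sum.reindex_bij_witness[where i = "\<lambda>p. (fst p)(i := snd p)" and j = "\<lambda>x. (x(i := 0), x i)"])
    fix a assume a: "a \<in> grid n k \<inter> {x. P x}"
    show "(fst (a(i := 0), a i))(i := snd (a(i := 0), a i)) = a" by auto
    show "(a(i := 0), a i) \<in> (grid n k \<inter> {x. P x \<and> x i = 0}) \<times> {..<k}"
      using a i k P[of a 0] by (auto intro: grid_upd simp: grid_iff)
    show "g ((fst (a(i := 0), a i))(i := snd (a(i := 0), a i))) = g a" by auto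
  next
    fix b assume b: "b \<in> (grid n k \<inter> {x. P x \<and> x i = 0}) \<times> {..<k}"
    then show "(((fst b)(i := snd b))(i := 0), ((fst b)(i := snd b)) i) = b"
      by (cases b) auto
    show "(fst b)(i := snd b) \<in> grid n k \<inter> {x. P x}"
      using b i P[of "fst b" "snd b"] by (cases b) (auto intro: grid_upd)
  qed
  also have "\<dots> = (\<Sum>x\<in>grid n k \<inter> {x. P x \<and> x i = 0}. \<Sum>v<k. g (x(i := v)))"
    by (simp add: sum.cartesian_product case_prod_beta)
  finally show ?thesis .
qed

definition ee :: "nat \<Rightarrow> nat \<Rightarrow> real" where
  "ee j v = (if v = j then 1 else 0) - (if v = 0 then 1 else 0)"

lemma sum_ee:
  assumes "j < k" "0 < k"
  shows "(\<Sum>v<k. h v * ee j v) = h j - h 0"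
proof -
  have "(\<Sum>v<k. h v * ee j v) = (\<Sum>v<k. (if v = j then h v else 0)) - (\<Sum>v<k. (if v = 0 then h v else 0))"
    unfolding ee_def sum_subtractf[symmetric] by (rule sum.cong) auto
  also have "\<dots> = h j - h 0" using assms by (simp add: sum.delta)
  finally show ?thesis .
qed

lemma cat_upd:
  assumes "j \<in> {1..k-1}"
  shows "catprob k (r(j := t)) v = catprob k r v + (t - r j) * ee j v"
proof -
  have e: "(\<Sum>j'\<in>{1..k-1}-{j}. (r(j := t)) j') = (\<Sum>j'\<in>{1..k-1}-{j}. r j')"
    by (rule sum.cong) auto
  have f: "finite {1..k-1}" by simp
  have "(\<Sum>j'\<in>{1..k-1}. (r(j := t)) j') = t + (\<Sum>j'\<in>{1..k-1}-{j}. (r(j := t)) j')"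
    using sum.remove[OF f assms, of "r(j := t)"] by simp
  moreover have "(\<Sum>j'\<in>{1..k-1}. r j') = r j + (\<Sum>j'\<in>{1..k-1}-{j}. r j')"
    using sum.remove[OF f assms, of r] by simp
  ultimately have "(\<Sum>j'\<in>{1..k-1}. (r(j := t)) j') = (\<Sum>j'\<in>{1..k-1}. r j') - r j + t"
    using e by simp
  then show ?thesis using assms unfolding catprob_def ee_def by auto
qed

lemma prod_upd_in:
  assumes "finite M" "i \<in> M" "l \<in> {1..k-1}"
  shows "(\<Prod>m\<in>M. catprob k ((\<rho>(i := (\<rho> i)(l := t))) m) (x m)) =
         (\<Prod>m\<in>M. catprob k (\<rho> m) (x m)) + (t - \<rho> i l) * (ee l (x i) * (\<Prod>m\<in>M-{i}. catprob k (\<rho> m) (x m)))"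
proof -
  have eq: "(\<Prod>m\<in>M-{i}. catprob k ((\<rho>(i := (\<rho> i)(l := t))) m) (x m)) = (\<Prod>m\<in>M-{i}. catprob k (\<rho> m) (x m))"
    by (rule prod.cong) auto
  show ?thesis
    using assms
    by (simp add: prod.remove[of M i] eq cat_upd algebra_simps)
qed

lemma prod_upd_out:
  assumes "i \<notin> M"
  shows "(\<Prod>m\<in>M. catprob k ((\<rho>(i := (\<rho> i)(l := t))) m) (x m)) = (\<Prod>m\<in>M. catprob k (\<rho> m) (x m))"
  using assms by (intro prod.cong) auto

lemma deriv_affine:
  fixes g :: "real \<Rightarrow> real"
  assumes "\<And>t. g t = a + (t - c) * b"
  shows "deriv g s = b"
proof -
  have "((\<lambda>t. a + (t - c) * b) has_real_derivative (0 + (1 - 0) * b)) (at s)"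
    by (auto intro!: derivative_eq_intros)
  moreover have "g = (\<lambda>t. a + (t - c) * b)" using assms by (rule ext)
  ultimately have "(g has_real_derivative b) (at s)" by simp
  then show ?thesis by (rule DERIV_imp_deriv)
qed

definition D1 :: "nat \<Rightarrow> nat \<Rightarrow> ((nat \<Rightarrow> nat) \<Rightarrow> real) \<Rightarrow> nat \<Rightarrow> nat \<Rightarrow> (nat \<Rightarrow> nat \<Rightarrow> real) \<Rightarrow> real" where
  "D1 n k f i j \<rho> = (\<Sum>x\<in>grid n k. f x * (ee j (x i) * (\<Prod>m\<in>{1..n}-{i}. catprob k (\<rho> m) (x m))))"

definition D2 :: "nat \<Rightarrow> nat \<Rightarrow> ((nat \<Rightarrow> nat) \<Rightarrow> real) \<Rightarrow> nat \<Rightarrow> nat \<Rightarrow> nat \<Rightarrow> nat \<Rightarrow> (nat \<Rightarrow> nat \<Rightarrow> real) \<Rightarrow> real" where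
  "D2 n k f i j i' l \<rho> = (\<Sum>x\<in>grid n k. f x * (ee j (x i) * (ee l (x i') * (\<Prod>m\<in>{1..n}-{i}-{i'}. catprob k (\<rho> m) (x m)))))"

lemma F_upd:
  assumes "i \<in> {1..n}" "j \<in> {1..k-1}"
  shows "gen_mle n k f (\<rho>(i := (\<rho> i)(j := t))) = gen_mle n k f \<rho> + (t - \<rho> i j) * D1 n k f i j \<rho>"
proof -
  have "\<And>x. f x * (\<Prod>m\<in>{1..n}. catprob k ((\<rho>(i := (\<rho> i)(j := t))) m) (x m)) =
     f x * (\<Prod>m\<in>{1..n}. catprob k (\<rho> m) (x m)) + (t - \<rho> i j) * (f x * (ee j (x i) * (\<Prod>m\<in>{1..n}-{i}. catprob k (\<rho> m) (x m))))"
    using assms by (subst prod_upd_in) (auto simp: algebra_simps)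
  then show ?thesis unfolding gen_mle_def D1_def by (simp only: sum.distrib sum_distrib_left)
qed

lemma pd1:
  assumes "i \<in> {1..n}" "j \<in> {1..k-1}"
  shows "pderiv_ij (gen_mle n k f) i j = D1 n k f i j"
proof
  fix \<rho>
  show "pderiv_ij (gen_mle n k f) i j \<rho> = D1 n k f i j \<rho>"
    unfolding pderiv_ij_def
    by (rule deriv_affine[where a = "gen_mle n k f \<rho>" and c = "\<rho> i j"]) (rule F_upd[OF assms])
qed

lemma D1_upd_same:
  "D1 n k f i j (\<rho>(i := (\<rho> i)(l := t))) = D1 n k f i j \<rho>"
proof -
  have "i \<notin> {1..n} - {i}" by simp
  note pu = prod_upd_out[OF this]
  show ?thesis unfolding D1_def pu ..
qed

lemma D1_upd_other:
  assumes "i' \<in> {1..n}" "i' \<noteq> i" "l \<in> {1..k-1}"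
  shows "D1 n k f i j (\<rho>(i' := (\<rho> i')(l := t))) = D1 n k f i j \<rho> + (t - \<rho> i' l) * D2 n k f i j i' l \<rho>"
proof -
  have "i' \<in> {1..n} - {i}" using assms by auto
  then show ?thesis
  proof -
    assume a: "i' \<in> {1..n} - {i}"
    have "\<And>x. f x * (ee j (x i) * (\<Prod>m\<in>{1..n}-{i}. catprob k ((\<rho>(i' := (\<rho> i')(l := t))) m) (x m))) =
     f x * (ee j (x i) * (\<Prod>m\<in>{1..n}-{i}. catprob k (\<rho> m) (x m))) + (t - \<rho> i' l) * (f x * (ee j (x i) * (ee l (x i') * (\<Prod>m\<in>{1..n}-{i}-{i'}. catprob k (\<rho> m) (x m)))))"
      using assms a by (subst prod_upd_in) (auto simp: algebra_simps)
    then show ?thesis unfolding D1_def D2_def by (simp only: sum.distrib sum_distrib_left)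
  qed
qed

lemma catprob_nonneg:
  assumes "\<rho> \<in> simplex_prod n k" "m \<in> {1..n}" "v < k"
  shows "catprob k (\<rho> m) v \<ge> 0"
  using assms unfolding simplex_prod_def catprob_def by auto


lemma Q_nonneg:
  assumes "\<rho> \<in> simplex_prod n k" "x \<in> grid n k"
  shows "(\<Prod>m\<in>{1..n}-S. catprob k (\<rho> m) (x m)) \<ge> 0"
  using assms by (intro prod_nonneg) (auto intro!: catprob_nonneg simp: grid_iff)

lemma Q_upd:
  assumes "i \<in> S"
  shows "(\<Prod>m\<in>{1..n}-S. catprob k (\<rho> m) ((x(i := v)) m)) = (\<Prod>m\<in>{1..n}-S. catprob k (\<rho> m) (x m))"
  using assms by (intro prod.cong) auto

lemma D1_nonneg:
  assumes mono: "monotone_grid n k f" and rho: "\<rho> \<in> simplex_prod n k"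
    and i: "i \<in> {1..n}" and j: "j \<in> {1..k-1}"
  shows "D1 n k f i j \<rho> \<ge> 0"
proof -
  define Q where "Q x = (\<Prod>m\<in>{1..n}-{i}. catprob k (\<rho> m) (x m))" for x
  define g where "g x = f x * (ee j (x i) * Q x)" for x
  have k: "0 < k" "j < k" "j \<noteq> 0" using j by auto
  have "D1 n k f i j \<rho> = (\<Sum>x\<in>grid n k \<inter> {x. True}. g x)"
    unfolding D1_def g_def Q_def by simp
  also have "\<dots> = (\<Sum>x\<in>grid n k \<inter> {x. True \<and> x i = 0}. \<Sum>v<k. g (x(i := v)))"
    by (rule split_coord[OF i _ k(1)]) simp
  also have "\<dots> = (\<Sum>x\<in>grid n k \<inter> {x. True \<and> x i = 0}. (f (x(i := j)) - f x) * Q x)"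
  proof (rule sum.cong[OF refl])
    fix x assume x: "x \<in> grid n k \<inter> {x. True \<and> x i = 0}"
    have "(\<Sum>v<k. g (x(i := v))) = (\<Sum>v<k. (f (x(i := v)) * Q x) * ee j v)"
      unfolding g_def Q_def by (intro sum.cong refl) (simp add: Q_upd)
    also have "\<dots> = f (x(i := j)) * Q x - f (x(i := 0)) * Q x"
      by (rule sum_ee[where h="\<lambda>v. f (x(i := v)) * Q x"]) (use k in auto)
    also have "x(i := 0) = x" using x by auto
    finally show "(\<Sum>v<k. g (x(i := v))) = (f (x(i := j)) - f x) * Q x"
      by (simp only: left_diff_distrib)
  qed
  also have "\<dots> \<ge> 0"
  proof (rule sum_nonneg)
    fix x assume x: "x \<in> grid n k \<inter> {x. True \<and> x i = 0}"
    have "x(i := j) \<in> grid n k" using x i k by (auto intro!: grid_upd)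
    moreover have "\<forall>m\<in>{1..n}. x m \<le> (x(i := j)) m" using x by auto
    ultimately have "f x \<le> f (x(i := j))"
      using mono x unfolding monotone_grid_def by blast
    moreover have "Q x \<ge> 0" unfolding Q_def using rho x by (intro Q_nonneg) auto
    ultimately show "(f (x(i := j)) - f x) * Q x \<ge> 0" by simp
  qed
  finally show ?thesis .
qed

lemma helper: "(s::real) = A * Q - C * Q - (B * Q - D * Q) \<Longrightarrow> s = (A - B - C + D) * Q"
  by (simp add: algebra_simps)

lemma D2_nonpos:
  assumes sub: "integer_submodular n k f" and rho: "\<rho> \<in> simplex_prod n k"
    and i: "i \<in> {1..n}" and j: "j \<in> {1..k-1}"
    and i': "i' \<in> {1..n}" and l: "l \<in> {1..k-1}" and ne: "i \<noteq> i'"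
  shows "D2 n k f i j i' l \<rho> \<le> 0"
proof -
  define Q where "Q x = (\<Prod>m\<in>{1..n}-{i}-{i'}. catprob k (\<rho> m) (x m))" for x
  define g where "g x = f x * (ee j (x i) * (ee l (x i') * Q x))" for x
  have k: "0 < k" "j < k" "j \<noteq> 0" "l < k" "l \<noteq> 0" using j l by auto
  have "D2 n k f i j i' l \<rho> = (\<Sum>x\<in>grid n k \<inter> {x. True}. g x)"
    unfolding D2_def g_def Q_def by simp
  also have "\<dots> = (\<Sum>x\<in>grid n k \<inter> {x. True \<and> x i = 0}. \<Sum>v<k. g (x(i := v)))"
    by (rule split_coord[OF i _ k(1)]) simp
  also have "\<dots> = (\<Sum>x\<in>grid n k \<inter> {x. x i = 0}. \<Sum>v<k. g (x(i := v)))"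
    by simp
  also have "\<dots> = (\<Sum>x\<in>grid n k \<inter> {x. x i = 0 \<and> x i' = 0}. \<Sum>w<k. \<Sum>v<k. g (x(i' := w, i := v)))"
    by (rule split_coord[OF i' _ k(1)]) (use ne in auto)
  also have "\<dots> = (\<Sum>x\<in>grid n k \<inter> {x. x i = 0 \<and> x i' = 0}.
      (f (x(i' := l, i := j)) - f (x(i := j)) - f (x(i' := l)) + f x) * Q x)"
  proof (rule sum.cong[OF refl])
    fix x assume x: "x \<in> grid n k \<inter> {x. x i = 0 \<and> x i' = 0}"
    have Qx: "Q (x(i' := w, i := v)) = Q x" for w v
      unfolding Q_def by (intro prod.cong) auto
    have "(\<Sum>v<k. g (x(i' := w, i := v))) = (\<Sum>v<k. (f (x(i' := w, i := v)) * (ee l w * Q x)) * ee j v)" for w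
      unfolding g_def using ne by (intro sum.cong refl) (simp add: Qx)
    also have "\<dots> w = f (x(i' := w, i := j)) * (ee l w * Q x) - f (x(i' := w, i := 0)) * (ee l w * Q x)" for w
      using k by (intro sum_ee) auto
    finally have "(\<Sum>w<k. \<Sum>v<k. g (x(i' := w, i := v))) =
        (\<Sum>w<k. (f (x(i' := w, i := j)) * Q x - f (x(i' := w, i := 0)) * Q x) * ee l w)"
      by (intro sum.cong refl) (simp add: algebra_simps)
    also have "\<dots> = (f (x(i' := l, i := j)) * Q x - f (x(i' := l, i := 0)) * Q x)
        - (f (x(i' := 0, i := j)) * Q x - f (x(i' := 0, i := 0)) * Q x)"
      using k by (intro sum_ee) auto
    also have "x(i' := 0, i := 0) = x" using x by auto
    also have "x(i' := 0, i := j) = x(i := j)" using x by auto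
    also have "x(i' := l, i := 0) = x(i' := l)" using x ne by (auto simp: fun_eq_iff)
    finally show "(\<Sum>w<k. \<Sum>v<k. g (x(i' := w, i := v))) =
      (f (x(i' := l, i := j)) - f (x(i := j)) - f (x(i' := l)) + f x) * Q x"
      by (rule helper)
  qed
  also have "\<dots> \<le> 0"
  proof (rule sum_nonpos)
    fix x assume x: "x \<in> grid n k \<inter> {x. x i = 0 \<and> x i' = 0}"
    have g1: "x(i := j) \<in> grid n k" "x(i' := l) \<in> grid n k"
      using x i i' k by (auto intro!: grid_upd)
    have "vjoin (x(i := j)) (x(i' := l)) = x(i' := l, i := j)"
      using x ne unfolding vjoin_def by (auto simp: fun_eq_iff)
    moreover have "vmeet (x(i := j)) (x(i' := l)) = x"
      using x ne unfolding vmeet_def by (auto simp: fun_eq_iff)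
    ultimately have "f (x(i' := l, i := j)) + f x \<le> f (x(i := j)) + f (x(i' := l))"
      using sub g1 unfolding integer_submodular_def by metis
    moreover have "{1..n}-{i}-{i'} = {1..n}-{i,i'}" by auto
    then have "Q x \<ge> 0" unfolding Q_def using rho x Q_nonneg[of \<rho> n k x "{i,i'}"] by auto
    ultimately show "(f (x(i' := l, i := j)) - f (x(i := j)) - f (x(i' := l)) + f x) * Q x \<le> 0"
      by (simp add: mult_nonpos_nonneg)
  qed
  finally show ?thesis .
qed

theorem proposition1:
  fixes n k :: nat and f :: "(nat \<Rightarrow> nat) \<Rightarrow> real" and \<rho> :: "nat \<Rightarrow> nat \<Rightarrow> real"
  assumes "n \<ge> 1" and "k \<ge> 2"
    and "integer_submodular n k f"
    and "\<rho> \<in> simplex_prod n k"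
  shows "(monotone_grid n k f \<longrightarrow>
           (\<forall>i\<in>{1..n}. \<forall>j\<in>{1..k-1}. pderiv_ij (gen_mle n k f) i j \<rho> \<ge> 0))
       \<and> (\<forall>i\<in>{1..n}. \<forall>i'\<in>{1..n}. \<forall>j\<in>{1..k-1}. \<forall>l\<in>{1..k-1}.
            pderiv_ij (pderiv_ij (gen_mle n k f) i j) i' l \<rho> \<le> 0)"
proof (intro conjI impI ballI)
  fix i j assume "monotone_grid n k f" "i \<in> {1..n}" "j \<in> {1..k-1}"
  then show "pderiv_ij (gen_mle n k f) i j \<rho> \<ge> 0"
    using assms by (simp add: pd1 D1_nonneg)
next
  fix i i' j l assume i: "i \<in> {1..n}" and i': "i' \<in> {1..n}" and j: "j \<in> {1..k-1}" and l: "l \<in> {1..k-1}"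
  have "pderiv_ij (pderiv_ij (gen_mle n k f) i j) i' l \<rho> = pderiv_ij (D1 n k f i j) i' l \<rho>"
    using i j by (simp add: pd1)
  also have "\<dots> \<le> 0"
  proof (cases "i' = i")
    case True
    have "pderiv_ij (D1 n k f i j) i' l \<rho> = 0"
      unfolding pderiv_ij_def True
      by (rule deriv_affine[where a = "D1 n k f i j \<rho>" and c = 0]) (simp add: D1_upd_same)
    then show ?thesis by simp
  next
    case False
    have "pderiv_ij (D1 n k f i j) i' l \<rho> = D2 n k f i j i' l \<rho>"
      unfolding pderiv_ij_def
      by (rule deriv_affine) (rule D1_upd_other[OF i' False l])
    also have "\<dots> \<le> 0" using D2_nonpos[OF assms(3,4) i j i' l] False by simp
    finally show ?thesis .
  qed
  finally show "pderiv_ij (pderiv_ij (gen_mle n k f) i j) i' l \<rho> \<le> 0" .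
qed

end
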